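(* Let $n\in\mathbb N$, $a_k=k/(n+1)$ for $0\le k\le n+1$, and $g_n(x)=\sum_{k=0}^n\binom nk(-1)^k\chi_{(a_k,a_{k+1})}(x)$. Define $G_n(x)=\int_0^x\cdots\int_0^{x_{i+1}}\cdots\int_0^{x_2}g_n(x_1)\,dx_1\ldots dx_i\ldots dx_n$ (the $n$-fold iterated integral of $g_n$ from $0$). Then $G_n\in C^{n-1}([0,1])$, $G_n(x)=O(x^n)$ as $x\to0^+$, $G_n(x)=O((x-1)^n)$ as $x\to1^-$, and $G_n>0$ on $(0,1)$.
   Context: $\chi_{(a,b)}$ denotes the indicator function of the interval $(a,b)$. *)

theory Defs
  imports "HOL-Analysis.Analysis" "HOL-Library.Landau_Symbols"
begin

definition node :: "nat \<Rightarrow> nat \<Rightarrow> real" where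
  "node n k = real k / real (n + 1)"

definition gfun :: "nat \<Rightarrow> real \<Rightarrow> real" where
  "gfun n x = (\<Sum>k\<le>n. real (n choose k) * (-1) ^ k *
                  indicator {node n k<..<node n (Suc k)} x)"

fun iter_int :: "nat \<Rightarrow> (real \<Rightarrow> real) \<Rightarrow> real \<Rightarrow> real" where
  "iter_int 0 f = f"
| "iter_int (Suc m) f = (\<lambda>x. integral {0..x} (iter_int m f))"

definition Gfun :: "nat \<Rightarrow> real \<Rightarrow> real" where
  "Gfun n = iter_int n (gfun n)"

definition Ck_on :: "nat \<Rightarrow> real set \<Rightarrow> (real \<Rightarrow> real) \<Rightarrow> bool" where
  "Ck_on k S f \<longleftrightarrow>
     (\<exists>D :: nat \<Rightarrow> real \<Rightarrow> real.
        (\<forall>x\<in>S. D 0 x = f x) \<and>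
        (\<forall>j\<le>k. continuous_on S (D j)) \<and>
        (\<forall>j<k. \<forall>x\<in>S. (D j has_real_derivative D (Suc j) x) (at x within S)))"

end

theory Submission
  imports Defs
begin


definition tp :: "nat \<Rightarrow> real \<Rightarrow> real \<Rightarrow> real" where
  "tp m a x = (if x \<le> a then 0 else (x - a) ^ m)"

lemma tp_mul: "x * tp M a x = tp (Suc M) a x + a * tp M a x"
  by (simp add: tp_def algebra_simps)

lemma tp_shift: "tp M a (x - h) = tp M (a + h) x"
  by (simp add: tp_def algebra_simps)

lemma alt_sum:
  fixes f :: "nat \<Rightarrow> real"
  shows "(\<Sum>k\<le>m. real (m choose k) * (-1) ^ k * (f k - f (Suc k)))
       = (\<Sum>j\<le>Suc m. (-1) ^ j * real (Suc m choose j) * f j)"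
proof -
  have "(\<Sum>j\<le>Suc m. (-1) ^ j * real (Suc m choose j) * f j)
     = f 0 + (\<Sum>j\<le>m. (-1) ^ Suc j * real (Suc m choose Suc j) * f (Suc j))"
    by (subst sum.atMost_Suc_shift) simp
  also have "\<dots> = f 0 + (\<Sum>j\<le>m. (-1) ^ Suc j * real (m choose j) * f (Suc j))
        + (\<Sum>j\<le>m. (-1) ^ Suc j * real (m choose Suc j) * f (Suc j))"
    by (simp add: sum.distrib[symmetric] algebra_simps)
  also have "(\<Sum>j\<le>m. (-1) ^ Suc j * real (m choose Suc j) * f (Suc j))
      = (\<Sum>j\<le>Suc m. (-1) ^ j * real (m choose j) * f j) - f 0"
  proof -
    have "(\<Sum>j\<le>Suc m. (-1) ^ j * real (m choose j) * f j) = f 0 + (\<Sum>j\<le>m. (-1) ^ Suc j * real (m choose Suc j) * f (Suc j))"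
      by (subst sum.atMost_Suc_shift) simp
    then show ?thesis by simp
  qed
  also have "(\<Sum>j\<le>Suc m. (-1) ^ j * real (m choose j) * f j) = (\<Sum>j\<le>m. (-1) ^ j * real (m choose j) * f j)"
    by simp
  finally show ?thesis
    by (simp add: sum_subtractf algebra_simps sum_negf)
qed

definition S :: "nat \<Rightarrow> real \<Rightarrow> real \<Rightarrow> real" where
  "S m h x = (\<Sum>j\<le>Suc m. (-1) ^ j * real (Suc m choose j) * tp m (real j * h) x)"

lemma zero_sum:
  fixes g :: "nat \<Rightarrow> real"
  shows "(\<Sum>j\<le>Suc M. (-1) ^ j * real (Suc M choose j) *
            (real j * g j + (real M + 1 - real j) * g (Suc j))) = 0"
proof -
  have c: "real (Suc M choose Suc i) * (real i + 1) = real (Suc M choose i) * (real M + 1 - real i)"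
    if "i \<le> M" for i
  proof -
    have "(Suc M choose Suc i) * Suc i = Suc M * (M choose i)"
      using Suc_times_binomial_eq[of M i] by simp
    moreover have "(Suc M - i) * (Suc M choose i) = Suc M * (M choose i)"
      using binomial_absorb_comp[of "Suc M" i] by simp
    ultimately have "real (Suc M choose Suc i) * real (Suc i) = real (Suc M choose i) * real (Suc M - i)"
      by (metis of_nat_mult mult.commute)
    then show ?thesis using that by (simp add: of_nat_diff algebra_simps)
  qed
  have A: "(\<Sum>j\<le>Suc M. (-1) ^ j * real (Suc M choose j) * (real j * g j))
     = (\<Sum>i\<le>M. (-1) ^ Suc i * real (Suc M choose Suc i) * ((real i + 1) * g (Suc i)))"
    by (subst sum.atMost_Suc_shift) (simp add: add.commute)
  have B: "(\<Sum>j\<le>Suc M. (-1) ^ j * real (Suc M choose j) * ((real M + 1 - real j) * g (Suc j)))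
     = (\<Sum>i\<le>M. (-1) ^ i * real (Suc M choose i) * ((real M + 1 - real i) * g (Suc i)))"
    by simp
  have N: "(\<Sum>i\<le>M. (-1) ^ Suc i * real (Suc M choose Suc i) * ((real i + 1) * g (Suc i)))
      = - (\<Sum>i\<le>M. (-1) ^ i * real (Suc M choose i) * ((real M + 1 - real i) * g (Suc i)))"
    unfolding sum_negf[symmetric]
  proof (rule sum.cong)
    fix i assume "i \<in> {..M}"
    then have "i \<le> M" by simp
    have c': "real (Suc M choose Suc i) = real (Suc M choose i) * (real M + 1 - real i) / (real i + 1)"
      using c[OF \<open>i \<le> M\<close>] by (simp del: binomial_Suc_Suc add: field_simps)
    show "(-1) ^ Suc i * real (Suc M choose Suc i) * ((real i + 1) * g (Suc i))
       = - ((-1) ^ i * real (Suc M choose i) * ((real M + 1 - real i) * g (Suc i)))"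
      unfolding c' by (simp del: binomial_Suc_Suc add: field_simps)
  qed simp
  have E: "(\<Sum>j\<le>Suc M. (-1) ^ j * real (Suc M choose j) *
            (real j * g j + (real M + 1 - real j) * g (Suc j)))
     = (\<Sum>j\<le>Suc M. (-1) ^ j * real (Suc M choose j) * (real j * g j))
      + (\<Sum>j\<le>Suc M. (-1) ^ j * real (Suc M choose j) * ((real M + 1 - real j) * g (Suc j)))"
    by (simp only: distrib_left sum.distrib)
  show ?thesis using E A B N by linarith
qed

lemma S_rec:
  "S (Suc M) h x = x * S M h x + ((real M + 2) * h - x) * S M h (x - h)"
proof -
  let ?g = "\<lambda>j. tp M (real j * h) x"
  have e1: "x * tp M (real j * h) x + ((real M + 2) * h - x) * tp M (real (Suc j) * h) x
      = (tp (Suc M) (real j * h) x - tp (Suc M) (real (Suc j) * h) x)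
        + h * (real j * ?g j + (real M + 1 - real j) * ?g (Suc j))" for j
  proof -
    have "((real M + 2) * h - x) * tp M (real (Suc j) * h) x
        = ((real M + 2) * h - real (Suc j) * h) * tp M (real (Suc j) * h) x - tp (Suc M) (real (Suc j) * h) x"
      using tp_mul[of x M "real (Suc j) * h"] by (simp add: algebra_simps)
    then show ?thesis using tp_mul[of x M "real j * h"] by (simp add: algebra_simps)
  qed
  have "x * S M h x + ((real M + 2) * h - x) * S M h (x - h)
     = (\<Sum>j\<le>Suc M. (-1) ^ j * real (Suc M choose j) *
          (x * tp M (real j * h) x + ((real M + 2) * h - x) * tp M (real (Suc j) * h) x))"
    unfolding S_def tp_shift
    by (simp add: sum_distrib_left sum.distrib[symmetric] algebra_simps)
  also have "\<dots> = (\<Sum>j\<le>Suc M. (-1) ^ j * real (Suc M choose j) *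
          (tp (Suc M) (real j * h) x - tp (Suc M) (real (Suc j) * h) x))
      + h * (\<Sum>j\<le>Suc M. (-1) ^ j * real (Suc M choose j) *
            (real j * ?g j + (real M + 1 - real j) * ?g (Suc j)))"
  proof -
    have "(\<Sum>j\<le>Suc M. (-1) ^ j * real (Suc M choose j) *
          (x * tp M (real j * h) x + ((real M + 2) * h - x) * tp M (real (Suc j) * h) x))
       = (\<Sum>j\<le>Suc M. (-1) ^ j * real (Suc M choose j) *
          (tp (Suc M) (real j * h) x - tp (Suc M) (real (Suc j) * h) x)
         + h * ((-1) ^ j * real (Suc M choose j) *
            (real j * ?g j + (real M + 1 - real j) * ?g (Suc j))))"
      by (rule sum.cong[OF refl], subst e1, simp add: algebra_simps)
    then show ?thesis by (simp only: sum.distrib sum_distrib_left)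
  qed
  also have "\<dots> = S (Suc M) h x"
  proof -
    have X0: "S (Suc M) h x = (\<Sum>k\<le>Suc M. real (Suc M choose k) * (-1) ^ k *
        (tp (Suc M) (real k * h) x - tp (Suc M) (real (Suc k) * h) x))"
      unfolding S_def by (rule alt_sum[symmetric])
    have X: "S (Suc M) h x = (\<Sum>k\<le>Suc M. (-1) ^ k * real (Suc M choose k) *
        (tp (Suc M) (real k * h) x - tp (Suc M) (real (Suc k) * h) x))"
      unfolding X0 by (simp only: mult.commute)
    have Z: "(\<Sum>j\<le>Suc M. (-1) ^ j * real (Suc M choose j) *
            (real j * ?g j + (real M + 1 - real j) * ?g (Suc j))) = 0"
      by (rule zero_sum)
    show ?thesis unfolding Z X by simp
  qed
  finally show ?thesis by simp
qed

lemma S_nonpos: "0 \<le> h \<Longrightarrow> x \<le> 0 \<Longrightarrow> S m h x = 0"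
  unfolding S_def tp_def
  by (intro sum.neutral ballI) (auto intro: order_trans[of x 0])

lemma S_zero: "0 < h \<Longrightarrow> S 0 h x = (if 0 < x \<and> x \<le> h then 1 else 0)"
  unfolding S_def tp_def by simp

lemma S_small: "0 < h \<Longrightarrow> 0 < x \<Longrightarrow> x < h \<Longrightarrow> S m h x = x ^ m"
proof (induction m)
  case 0 then show ?case by (simp add: S_zero)
next
  case (Suc M)
  have "S M h (x - h) = 0" using Suc by (intro S_nonpos) auto
  then show ?case using Suc by (simp add: S_rec)
qed

lemma S_big: "0 < h \<Longrightarrow> real (Suc m) * h < x \<Longrightarrow> S m h x = 0"
proof (induction m arbitrary: x)
  case 0 then show ?case by (simp add: S_zero)
next
  case (Suc M)
  have "S M h x = 0" using Suc.prems by (intro Suc.IH) (auto simp: algebra_simps)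
  moreover have "S M h (x - h) = 0" using Suc.prems by (intro Suc.IH) (auto simp: algebra_simps)
  ultimately show ?case by (simp add: S_rec)
qed

lemma S_top: "0 < h \<Longrightarrow> real m * h < x \<Longrightarrow> x < real (Suc m) * h
   \<Longrightarrow> S m h x = (real (Suc m) * h - x) ^ m"
proof (induction m arbitrary: x)
  case 0 then show ?case by (simp add: S_zero)
next
  case (Suc M)
  have "S M h x = 0" using Suc.prems by (intro S_big) (auto simp: algebra_simps)
  moreover have "S M h (x - h) = (real (Suc M) * h - (x - h)) ^ M"
    using Suc.prems by (intro Suc.IH) (auto simp: algebra_simps)
  ultimately show ?case by (simp add: S_rec algebra_simps)
qed

lemma S_nonneg_pos:
  assumes h: "0 < h"
  shows "(\<forall>x. 0 \<le> S m h x) \<and> (\<forall>x. 0 < x \<and> x < real (Suc m) * h \<longrightarrow> 0 < S m h x)"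
proof (induction m)
  case 0 then show ?case using h by (simp add: S_zero)
next
  case (Suc M)
  then have nn: "\<And>y. 0 \<le> S M h y" and ps: "\<And>y. 0 < y \<Longrightarrow> y < real (Suc M) * h \<Longrightarrow> 0 < S M h y"
    by auto
  have A: "0 \<le> S (Suc M) h x" for x
  proof (cases "x \<le> 0")
    case True then show ?thesis using h by (simp add: S_nonpos)
  next
    case False
    show ?thesis
    proof (cases "x \<le> (real M + 2) * h")
      case True
      then show ?thesis using False nn[of x] nn[of "x - h"]
        by (simp add: S_rec)
    next
      case F2: False
      then show ?thesis using h by (simp add: S_big algebra_simps)
    qed
  qed
  have B: "0 < S (Suc M) h x" if x: "0 < x" "x < real (Suc (Suc M)) * h" for x
  proof -
    have c2: "0 < (real M + 2) * h - x" using x by (simp add: algebra_simps)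
    have t2: "0 \<le> ((real M + 2) * h - x) * S M h (x - h)" using c2 nn[of "x-h"] by simp
    have t1: "0 \<le> x * S M h x" using x nn[of x] by simp
    show ?thesis
    proof (cases "x < real (Suc M) * h")
      case True
      then have "0 < x * S M h x" using x ps[of x] by simp
      then show ?thesis using t2 by (simp add: S_rec)
    next
      case False
      show ?thesis
      proof (cases "0 < x - h")
        case True
        have "x - h < real (Suc M) * h" using x by (simp add: algebra_simps)
        then have "0 < ((real M + 2) * h - x) * S M h (x - h)" using c2 ps[of "x-h"] True by simp
        then show ?thesis using t1 by (simp add: S_rec)
      next
        case F2: False
        have "h * real M \<le> 0" using False F2 by (simp add: algebra_simps)
        then have "real M \<le> 0" using h by (simp add: mult_le_0_iff)
        then have "M = 0" by simp
        then have "M = 0" "x = h" using False F2 by auto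
        then have "0 < x * S M h x" using h by (simp add: S_zero)
        then show ?thesis using t2 by (simp add: S_rec)
      qed
    qed
  qed
  show ?case using A B by blast
qed


definition Q :: "nat \<Rightarrow> nat \<Rightarrow> real \<Rightarrow> real" where
  "Q n m x = (\<Sum>k\<le>n. real (n choose k) * (-1) ^ k * (tp m (node n k) x - tp m (node n (Suc k)) x)) / fact m"

lemma tp_Suc_eq: "tp (Suc m) a = (\<lambda>x. (max (x - a) 0) ^ Suc m)"
  by (auto simp: tp_def fun_eq_iff max_def)

lemma cont_tp: "continuous_on A (tp (Suc m) a)"
  unfolding tp_Suc_eq by (intro continuous_intros)

lemma cont_Q: "continuous_on A (Q n (Suc m))"
  unfolding Q_def by (intro continuous_intros cont_tp) auto

lemma tp_deriv:
  assumes "t \<noteq> a"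
  shows "(tp (Suc m) a has_real_derivative real (Suc m) * tp m a t) (at t)"
proof (cases "t < a")
  case True
  have "((\<lambda>_. 0::real) has_real_derivative 0) (at t)" by simp
  then have "(tp (Suc m) a has_real_derivative 0) (at t)"
    by (rule has_field_derivative_transform_within_open[of _ _ _ "{..<a}"])
       (use True in \<open>auto simp: tp_def\<close>)
  then show ?thesis using True by (simp add: tp_def)
next
  case False
  then have ta: "a < t" using assms by simp
  have d1: "((\<lambda>x. x - a) has_real_derivative 1) (at t)" by (auto intro!: derivative_eq_intros)
  have "((\<lambda>x. (x - a) ^ Suc m) has_real_derivative real (Suc m) * (1 * (t - a) ^ (Suc m - Suc 0))) (at t)"
    by (rule DERIV_power[OF d1])
  then have "((\<lambda>x. (x - a) ^ Suc m) has_real_derivative real (Suc m) * (t - a) ^ m) (at t)"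
    by simp
  then have "(tp (Suc m) a has_real_derivative real (Suc m) * (t - a) ^ m) (at t)"
    by (rule has_field_derivative_transform_within_open[of _ _ _ "{a<..}"])
       (use ta in \<open>auto simp: tp_def\<close>)
  then show ?thesis using ta by (simp add: tp_def)
qed

lemma node_nonneg: "0 \<le> node n k"
  by (simp add: node_def)

lemma node_mono: "k \<le> k' \<Longrightarrow> node n k \<le> node n k'"
  by (simp add: node_def divide_right_mono)

lemma node_strict: "k < k' \<Longrightarrow> node n k < node n k'"
  by (simp add: node_def divide_strict_right_mono)

lemma Q_deriv:
  assumes t: "t \<notin> node n ` {..Suc n}"
  shows "(Q n (Suc m) has_real_derivative Q n m t) (at t)"
proof -
  let ?S = "real (Suc m)"
  have "((\<lambda>x. \<Sum>k\<le>n. real (n choose k) * (-1) ^ k * (tp (Suc m) (node n k) x - tp (Suc m) (node n (Suc k)) x))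
     has_real_derivative (\<Sum>k\<le>n. real (n choose k) * (-1) ^ k * (?S * tp m (node n k) t - ?S * tp m (node n (Suc k)) t))) (at t)"
  proof (intro DERIV_sum DERIV_cmult DERIV_diff tp_deriv)
    fix k assume "k \<in> {..n}"
    then show "t \<noteq> node n k" "t \<noteq> node n (Suc k)" using t by auto
  qed
  then have D: "(Q n (Suc m) has_real_derivative
      (\<Sum>k\<le>n. real (n choose k) * (-1) ^ k * (?S * tp m (node n k) t - ?S * tp m (node n (Suc k)) t)) / fact (Suc m)) (at t)"
    unfolding Q_def by (rule DERIV_cdivide)
  have e1: "(\<Sum>k\<le>n. real (n choose k) * (-1) ^ k * (?S * tp m (node n k) t - ?S * tp m (node n (Suc k)) t))
     = ?S * (\<Sum>k\<le>n. real (n choose k) * (-1) ^ k * (tp m (node n k) t - tp m (node n (Suc k)) t))"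
    by (simp add: sum_distrib_left algebra_simps)
  have e2: "fact (Suc m) = ?S * (fact m :: real)" by (simp only: fact_Suc of_nat_mult)
  have e3: "\<And>T. ?S * T / (?S * fact m) = T / (fact m :: real)"
    by (rule mult_divide_mult_cancel_left) simp
  have "(\<Sum>k\<le>n. real (n choose k) * (-1) ^ k * (?S * tp m (node n k) t - ?S * tp m (node n (Suc k)) t)) / fact (Suc m)
     = Q n m t"
    unfolding Q_def e1 e2 e3 ..
  with D show ?thesis by simp
qed

lemma gfun_Q0:
  assumes t: "t \<notin> node n ` {..Suc n}"
  shows "gfun n t = Q n 0 t"
  unfolding gfun_def Q_def fact_0 of_nat_1 div_by_1
proof (rule sum.cong[OF refl])
  fix k assume k: "k \<in> {..n}"
  have ne: "t \<noteq> node n (Suc k)" using t k by auto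
  have lt: "node n k < node n (Suc k)" by (rule node_strict) simp
  have "indicator {node n k<..<node n (Suc k)} t = tp 0 (node n k) t - tp 0 (node n (Suc k)) t"
    using ne lt by (auto simp: tp_def indicator_def)
  then show "real (n choose k) * (-1) ^ k * indicator {node n k<..<node n (Suc k)} t
      = real (n choose k) * (-1) ^ k * (tp 0 (node n k) t - tp 0 (node n (Suc k)) t)" by simp
qed

lemma Q_at0: "Q n (Suc m) 0 = 0"
  unfolding Q_def tp_def using node_nonneg by simp

lemma Q_integral:
  assumes x: "0 \<le> x" and f: "\<And>t. t \<in> {0..x} - node n ` {..Suc n} \<Longrightarrow> f t = Q n m t"
  shows "(f has_integral Q n (Suc m) x) {0..x}"
proof -
  have "(Q n m has_integral Q n (Suc m) x - Q n (Suc m) 0) {0..x}"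
  proof (rule fundamental_theorem_of_calculus_strong[of "node n ` {..Suc n}"])
    fix t assume "t \<in> {0..x} - node n ` {..Suc n}"
    then show "(Q n (Suc m) has_vector_derivative Q n m t) (at t)"
      using Q_deriv[of t n m] by (simp add: has_real_derivative_iff_has_vector_derivative)
  qed (use x cont_Q in auto)
  then have "(Q n m has_integral Q n (Suc m) x) {0..x}" by (simp add: Q_at0)
  then show ?thesis
    by (intro has_integral_spike_finite[of "node n ` {..Suc n}" _ f "Q n m"]) (use f in auto)
qed

lemma iter_Q: "0 \<le> x \<Longrightarrow> iter_int (Suc m) (gfun n) x = Q n (Suc m) x"
proof (induction m arbitrary: x)
  case 0
  have "(gfun n has_integral Q n (Suc 0) x) {0..x}"
    by (rule Q_integral) (use 0 gfun_Q0 in auto)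
  then show ?case by (simp add: integral_unique)
next
  case (Suc m)
  have "(iter_int (Suc m) (gfun n) has_integral Q n (Suc (Suc m)) x) {0..x}"
    by (rule Q_integral) (use Suc in auto)
  then show ?case by (simp add: integral_unique)
qed

lemma Q_S: "Q n n x = S n (1 / real (Suc n)) x / fact n"
proof -
  have nd: "node n j = real j * (1 / real (Suc n))" for j by (simp add: node_def)
  show ?thesis unfolding Q_def S_def nd[symmetric]
    by (simp only: alt_sum[of n "\<lambda>k. tp n (node n k) x"])
qed

lemma div_fact_le: "norm (z / fact n :: real) \<le> 1 * norm z"
proof -
  have "1 \<le> (fact n :: real)" by simp
  then have "\<bar>z\<bar> / fact n \<le> \<bar>z\<bar>" by (simp add: divide_le_eq mult_le_cancel_left1)
  then show ?thesis by simp
qed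

theorem lemma6p4:
  fixes n :: nat
  assumes "n \<ge> 1"
  shows "Ck_on (n - 1) {0..1} (Gfun n)
       \<and> Gfun n \<in> O[at_right 0](\<lambda>x. x ^ n)
       \<and> Gfun n \<in> O[at_left 1](\<lambda>x. (x - 1) ^ n)
       \<and> (\<forall>x\<in>{0<..<1}. Gfun n x > 0)"
proof -
  define h where "h = 1 / real (Suc n)"
  have h: "0 < h" by (simp add: h_def)
  have h1: "real (Suc n) * h = 1" by (simp add: h_def)
  obtain n' where n': "n = Suc n'" using assms by (cases n) auto
  have G: "Gfun n x = S n h x / fact n" if "0 \<le> x" for x
    using iter_Q[OF that, of n' n] Q_S[of n x] unfolding Gfun_def h_def n' by simp
  have C: "Ck_on (n - 1) {0..1} (Gfun n)"
    unfolding Ck_on_def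
  proof (intro exI[of _ "\<lambda>j. iter_int (n - j) (gfun n)"] conjI allI impI ballI)
    fix x show "iter_int (n - 0) (gfun n) x = Gfun n x" by (simp add: Gfun_def)
  next
    fix j assume j: "j \<le> n - 1"
    then have e: "n - j = Suc (n - Suc j)" using assms by simp
    have "continuous_on {0..1} (Q n (Suc (n - Suc j)))" by (rule cont_Q)
    moreover have "\<forall>x\<in>{0..1}. Q n (Suc (n - Suc j)) x = iter_int (Suc (n - Suc j)) (gfun n) x"
      by (metis atLeastAtMost_iff iter_Q)
    ultimately show "continuous_on {0..1} (iter_int (n - j) (gfun n))"
      unfolding e using continuous_on_cong by blast
  next
    fix j x assume j: "j < n - 1" and x: "x \<in> {0..1::real}"
    then have e: "n - j = Suc (Suc (n - Suc (Suc j)))" by simp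
    have e2: "n - Suc j = Suc (n - Suc (Suc j))" using j by simp
    have "continuous_on {0..1} (Q n (Suc (n - Suc (Suc j))))" by (rule cont_Q)
    moreover have "\<forall>x\<in>{0..1}. Q n (Suc (n - Suc (Suc j))) x = iter_int (Suc (n - Suc (Suc j))) (gfun n) x"
      by (metis atLeastAtMost_iff iter_Q)
    ultimately have c: "continuous_on {0..1} (iter_int (n - Suc j) (gfun n))"
      unfolding e2 using continuous_on_cong by blast
    show "(iter_int (n - j) (gfun n) has_real_derivative iter_int (n - Suc j) (gfun n) x) (at x within {0..1})"
      using integral_has_real_derivative[OF c x] unfolding e e2 by simp
  qed
  have O1: "Gfun n \<in> O[at_right 0](\<lambda>x. x ^ n)"
  proof (rule bigoI[where c=1])
    show "\<forall>\<^sub>F x in at_right 0. norm (Gfun n x) \<le> 1 * norm (x ^ n)"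
      unfolding eventually_at_right_field
    proof (intro exI[of _ h] conjI allI impI)
      fix y :: real assume y: "0 < y" "y < h"
      have "Gfun n y = y ^ n / fact n" using G[of y] S_small[OF h y] y by simp
      then show "norm (Gfun n y) \<le> 1 * norm (y ^ n)"
        using div_fact_le[of "y ^ n" n] by simp
    qed (use h in simp)
  qed
  have O2: "Gfun n \<in> O[at_left 1](\<lambda>x. (x - 1) ^ n)"
  proof (rule bigoI[where c=1])
    show "\<forall>\<^sub>F x in at_left 1. norm (Gfun n x) \<le> 1 * norm ((x - 1) ^ n)"
      unfolding eventually_at_left_field
    proof (intro exI[of _ "real n * h"] conjI allI impI)
      fix y :: real assume y: "real n * h < y" "y < 1"
      have "0 \<le> real n * h" using h by simp
      then have y0: "0 \<le> y" using y by linarith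
      have "Gfun n y = (1 - y) ^ n / fact n" using G[OF y0] S_top[OF h, of n y] y h1 by simp
      moreover have "norm ((1 - y) ^ n) = norm ((y - 1) ^ n)"
        by (simp add: power_abs abs_minus_commute)
      ultimately show "norm (Gfun n y) \<le> 1 * norm ((y - 1) ^ n)"
        using div_fact_le[of "(1 - y) ^ n" n] by simp
    qed (use h1 h in \<open>simp add: algebra_simps\<close>)
  qed
  have P: "\<forall>x\<in>{0<..<1}. Gfun n x > 0"
  proof
    fix x :: real assume "x \<in> {0<..<1}"
    then have x: "0 < x" "x < real (Suc n) * h" using h1 by auto
    then have "0 < S n h x" using S_nonneg_pos[OF h, of n] by blast
    then show "Gfun n x > 0" using G[of x] x by simp
  qed
  show ?thesis using C O1 O2 P by blast
qed

end
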